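(* Let $n\ge 1$ be an integer and let $x$ be a positive integer with $x\equiv 0\pmod{n!}$. Then $x+\frac{1}{n}$ is a cutoff.
   Context: For a real number $\alpha\ge 1$, define the integer sequence $(P^\alpha_i)_{i\ge 0}$ by $P^\alpha_0=0$, $P^\alpha_1=1$, and for $k\ge 1$, $P^\alpha_{k+1}=P^\alpha_k+P^\alpha_j$, where $j\ge1$ is the unique index with $\alpha P^\alpha_{j-1}<P^\alpha_k\le \alpha P^\alpha_j$. A cutoff is a real number $\alpha\ge 1$ such that for every real $\beta$ with $1\le\beta<\alpha$, the sequences $(P^\alpha_i)$ and $(P^\beta_i)$ are not identical. *)

theory Defs
  imports Complex_Main
begin

text \<open>The sequence (P^alpha_i): P 0 = 0, P 1 = 1, and for k >= 1,
  P (k+1) = P k + P j where j >= 1 is the unique index with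
  alpha * P (j-1) < P k <= alpha * P j.
  Plist alpha k is the list [P 0, ..., P (k+1)] (length k+2).  The index j
  is searched among 1..k, which always contains it (as P is nondecreasing
  and alpha >= 1, j = k satisfies P k <= alpha * P k).\<close>

fun Plist :: "real \<Rightarrow> nat \<Rightarrow> nat list" where
  "Plist \<alpha> 0 = [0, 1]"
| "Plist \<alpha> (Suc k) =
     (let ps = Plist \<alpha> k;
          Pk = ps ! Suc k;
          j = (THE j. 1 \<le> j \<and> j \<le> Suc k \<and>
                 \<alpha> * real (ps ! (j - 1)) < real Pk \<and> real Pk \<le> \<alpha> * real (ps ! j))
      in ps @ [Pk + ps ! j])"

definition Pseq :: "real \<Rightarrow> nat \<Rightarrow> nat" where
  "Pseq \<alpha> i = Plist \<alpha> i ! i"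

definition cutoff :: "real \<Rightarrow> bool" where
  "cutoff \<alpha> \<longleftrightarrow> 1 \<le> \<alpha> \<and> (\<forall>\<beta>. 1 \<le> \<beta> \<and> \<beta> < \<alpha> \<longrightarrow> Pseq \<alpha> \<noteq> Pseq \<beta>)"

lemma Pseq_0: "Pseq \<alpha> 0 = 0" by (simp add: Pseq_def)
lemma Pseq_1: "Pseq \<alpha> 1 = 1"
  by (simp add: Pseq_def Let_def nth_append)

end

theory Submission
  imports Defs
begin

lemma Plist_length: "length (Plist a k) = k + 2"
  by (induction k) (simp_all add: Let_def)

lemma Plist_mono: "k \<le> m \<Longrightarrow> i < k + 2 \<Longrightarrow> Plist a m ! i = Plist a k ! i"
proof (induction m)
  case 0 then show ?case by simp
next
  case (Suc m)
  show ?case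
  proof (cases "k = Suc m")
    case False
    then have "k \<le> m" using Suc by simp
    then have "i < length (Plist a m)" using Suc Plist_length by simp
    then have "Plist a (Suc m) ! i = Plist a m ! i" by (simp add: Let_def nth_append)
    then show ?thesis using Suc \<open>k \<le> m\<close> by simp
  qed simp
qed

lemma Plist_Pseq: "i < k + 2 \<Longrightarrow> Plist a k ! i = Pseq a i"
proof (cases "i \<le> k")
  case True
  assume "i < k + 2"
  then show ?thesis using True Plist_mono[of i k i a] by (simp add: Pseq_def)
next
  case False
  assume "i < k + 2"
  then have "i = Suc k" using False by simp
  then show ?thesis using Plist_mono[of k "Suc k" i a] by (simp add: Pseq_def)
qed

lemma Pseq_Suc0 [simp]: "Pseq a (Suc 0) = 1"
  using Pseq_1[of a] by simp

definition Qp :: "real \<Rightarrow> nat \<Rightarrow> nat \<Rightarrow> bool" where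
  "Qp a k j \<longleftrightarrow> 1 \<le> j \<and> j \<le> Suc k \<and>
     a * real (Pseq a (j - 1)) < real (Pseq a (Suc k)) \<and> real (Pseq a (Suc k)) \<le> a * real (Pseq a j)"

lemma Pseq_rec:
  assumes "Qp a k j" and "\<And>j'. Qp a k j' \<Longrightarrow> j' = j"
  shows "Pseq a (Suc (Suc k)) = Pseq a (Suc k) + Pseq a j"
proof -
  have eqf: "(\<lambda>j. 1 \<le> j \<and> j \<le> Suc k \<and>
                 a * real (Plist a k ! (j - 1)) < real (Plist a k ! Suc k) \<and> real (Plist a k ! Suc k) \<le> a * real (Plist a k ! j))
        = Qp a k"
  proof (rule ext)
    fix j
    show "(1 \<le> j \<and> j \<le> Suc k \<and>
                 a * real (Plist a k ! (j - 1)) < real (Plist a k ! Suc k) \<and> real (Plist a k ! Suc k) \<le> a * real (Plist a k ! j))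
        = Qp a k j"
    proof (cases "1 \<le> j \<and> j \<le> Suc k")
      case True
      have e1: "Plist a k ! (j - 1) = Pseq a (j - 1)" using True by (intro Plist_Pseq) arith
      have e2: "Plist a k ! j = Pseq a j" using True by (intro Plist_Pseq) arith
      have e3: "Plist a k ! Suc k = Pseq a (Suc k)" by (intro Plist_Pseq) simp
      show ?thesis unfolding e1 e2 e3 Qp_def by (rule refl)
    next
      case False
      then show ?thesis unfolding Qp_def by blast
    qed
  qed
  have th: "(THE j. Qp a k j) = j" using assms(1) assms(2) by (rule the_equality)
  have jle: "j \<le> Suc k" using assms(1) by (simp add: Qp_def)
  have s1: "Pseq a (Suc (Suc k)) = Plist a (Suc k) ! Suc (Suc k)"
    by (rule Plist_Pseq[symmetric]) simp
  have s2: "Plist a (Suc k) = Plist a k @ [Plist a k ! Suc k + Plist a k ! (THE j. Qp a k j)]"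
    by (simp only: Plist.simps Let_def eqf)
  have s3: "Plist a (Suc k) ! Suc (Suc k) = Plist a k ! Suc k + Plist a k ! (THE j. Qp a k j)"
    using s2 Plist_length[of a k] by (metis add_2_eq_Suc' nth_append_length)
  have s4: "Plist a k ! Suc k = Pseq a (Suc k)" by (rule Plist_Pseq) simp
  have s5: "Plist a k ! (THE j. Qp a k j) = Pseq a j" unfolding th by (rule Plist_Pseq) (use jle in simp)
  show ?thesis using s1 s3 s4 s5 by simp
qed

lemma chain_mono:
  assumes "\<forall>i\<le>k. Pseq a i < Pseq a (Suc i)" "i \<le> i'" "i' \<le> Suc k"
  shows "Pseq a i \<le> Pseq a i'"
  using assms(2,3)
proof (induction i' rule: dec_induct)
  case (step m)
  have mk: "m \<le> k" using step.prems by simp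
  then have "Pseq a m < Pseq a (Suc m)" using assms(1) by blast
  moreover have "Pseq a i \<le> Pseq a m" using step.IH mk by simp
  ultimately show ?case by simp
next
  case base
  show ?case by simp
qed

lemma chain_strict:
  assumes "\<forall>i\<le>k. Pseq a i < Pseq a (Suc i)" "i < i'" "i' \<le> Suc k"
  shows "Pseq a i < Pseq a i'"
proof -
  have "Pseq a i < Pseq a (Suc i)" using assms by auto
  also have "\<dots> \<le> Pseq a i'" using chain_mono[OF assms(1)] assms by simp
  finally show ?thesis .
qed

lemma Pseq_chain:
  assumes "a \<ge> 1"
  shows "\<forall>i\<le>k. Pseq a i < Pseq a (Suc i)"
proof (induction k)
  case 0
  have "Pseq a (Suc 0) = 1" using Pseq_1[of a] by simp
  then show ?case by (simp add: Pseq_0)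
next
  case (Suc k)
  note ch = Suc.IH
  have pos: "Pseq a (Suc k) > 0" using chain_strict[OF ch, of 0 "Suc k"] by (simp add: Pseq_0)
  have ex: "\<exists>j. real (Pseq a (Suc k)) \<le> a * real (Pseq a j)"
    using assms by (intro exI[of _ "Suc k"]) (simp add: mult_le_cancel_right1)
  define j where "j = (LEAST j. real (Pseq a (Suc k)) \<le> a * real (Pseq a j))"
  have jP: "real (Pseq a (Suc k)) \<le> a * real (Pseq a j)"
    unfolding j_def using ex by (rule LeastI_ex)
  have jle: "j \<le> Suc k" unfolding j_def
    using assms by (intro Least_le) (simp add: mult_le_cancel_right1)
  have j1: "1 \<le> j"
  proof (rule ccontr)
    assume "\<not> 1 \<le> j" then have "j = 0" by simp
    then show False using jP pos by (simp add: Pseq_0)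
  qed
  have jm: "\<not> real (Pseq a (Suc k)) \<le> a * real (Pseq a (j - 1))"
  proof
    assume h: "real (Pseq a (Suc k)) \<le> a * real (Pseq a (j - 1))"
    have "j \<le> j - 1" using Least_le[of "\<lambda>j. real (Pseq a (Suc k)) \<le> a * real (Pseq a j)" "j - 1"] h j_def by simp
    then show False using j1 by simp
  qed
  have Q: "Qp a k j" using j1 jle jP jm by (simp add: Qp_def)
  have U: "j' = j" if "Qp a k j'" for j'
  proof (rule ccontr)
    assume ne: "j' \<noteq> j"
    show False
    proof (cases "j' < j")
      case True
      then show False using that not_less_Least[of j' "\<lambda>j. real (Pseq a (Suc k)) \<le> a * real (Pseq a j)"] j_def by (simp add: Qp_def)
    next
      case False
      then have "j \<le> j' - 1" "j' - 1 \<le> Suc k" using ne that by (auto simp: Qp_def)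
      then have "Pseq a j \<le> Pseq a (j' - 1)" using chain_mono[OF ch] by simp
      then have "a * real (Pseq a j) \<le> a * real (Pseq a (j' - 1))" using assms by simp
      then show False using jP that by (simp add: Qp_def)
    qed
  qed
  have "Pseq a (Suc (Suc k)) = Pseq a (Suc k) + Pseq a j" by (rule Pseq_rec[OF Q U])
  moreover have "Pseq a j > 0" using chain_strict[OF ch, of 0 j] j1 jle by (simp add: Pseq_0)
  ultimately show ?case using ch by (simp add: le_Suc_eq)
qed

lemma Pseq_strict_mono: "a \<ge> 1 \<Longrightarrow> strict_mono (Pseq a)"
  using Pseq_chain by (metis le_refl strict_mono_Suc_iff)

lemma Pseq_step:
  assumes "a \<ge> 1" "1 \<le> j" "a * real (Pseq a (j - 1)) < real (Pseq a (Suc k))"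
    "real (Pseq a (Suc k)) \<le> a * real (Pseq a j)"
  shows "Pseq a (Suc (Suc k)) = Pseq a (Suc k) + Pseq a j"
proof -
  have sm: "strict_mono (Pseq a)" using assms(1) Pseq_strict_mono by simp
  have Qall: "Qp a k j'" if "1 \<le> j'" "a * real (Pseq a (j' - 1)) < real (Pseq a (Suc k))"
    "real (Pseq a (Suc k)) \<le> a * real (Pseq a j')" for j'
  proof -
    have "j' \<le> Suc k"
    proof (rule ccontr)
      assume "\<not> j' \<le> Suc k"
      then have "Pseq a (Suc k) \<le> Pseq a (j' - 1)" using sm by (simp add: strict_mono_less_eq)
      then have r1: "real (Pseq a (Suc k)) \<le> real (Pseq a (j' - 1))" by simp
      have r2: "1 * real (Pseq a (j' - 1)) \<le> a * real (Pseq a (j' - 1))"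
        using assms(1) by (intro mult_right_mono) simp_all
      from r1 r2 that(2) show False by linarith
    qed
    then show ?thesis using that by (simp add: Qp_def)
  qed
  have U: "j' = j" if "Qp a k j'" for j'
  proof (rule ccontr)
    assume ne: "j' \<noteq> j"
    show False
    proof (cases "j' < j")
      case True
      then have "Pseq a j' \<le> Pseq a (j - 1)" using sm by (simp add: strict_mono_less_eq)
      then have h: "a * real (Pseq a j') \<le> a * real (Pseq a (j - 1))" using assms(1) by (intro mult_left_mono) simp_all
      have "real (Pseq a (Suc k)) \<le> a * real (Pseq a j')" using that unfolding Qp_def by blast
      with h assms(3) show False by linarith
    next
      case False
      then have "j \<le> j' - 1" using ne by simp
      then have "Pseq a j \<le> Pseq a (j' - 1)" using sm by (simp add: strict_mono_less_eq)
      then have h: "a * real (Pseq a j) \<le> a * real (Pseq a (j' - 1))" using assms(1) by (intro mult_left_mono) simp_all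
      have "a * real (Pseq a (j' - 1)) < real (Pseq a (Suc k))" using that unfolding Qp_def by blast
      with h assms(4) show False by linarith
    qed
  qed
  show ?thesis by (rule Pseq_rec[OF Qall[OF assms(2-4)] U])
qed

lemma Pseq_step_ex:
  assumes "a \<ge> 1"
  shows "\<exists>j\<ge>1. a * real (Pseq a (j - 1)) < real (Pseq a (Suc k)) \<and> real (Pseq a (Suc k)) \<le> a * real (Pseq a j)"
proof -
  have sm: "strict_mono (Pseq a)" using assms(1) Pseq_strict_mono by simp
  have pos: "Pseq a (Suc k) > 0" using sm Pseq_0 by (metis strict_monoD zero_less_Suc)
  have ex: "\<exists>j. real (Pseq a (Suc k)) \<le> a * real (Pseq a j)"
    using assms by (intro exI[of _ "Suc k"]) (simp add: mult_le_cancel_right1)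
  define j where "j = (LEAST j. real (Pseq a (Suc k)) \<le> a * real (Pseq a j))"
  have jP: "real (Pseq a (Suc k)) \<le> a * real (Pseq a j)"
    unfolding j_def using ex by (rule LeastI_ex)
  have j1: "1 \<le> j"
  proof (rule ccontr)
    assume "\<not> 1 \<le> j" then have "j = 0" by simp
    then show False using jP pos by (simp add: Pseq_0)
  qed
  have jm: "\<not> real (Pseq a (Suc k)) \<le> a * real (Pseq a (j - 1))"
  proof
    assume h: "real (Pseq a (Suc k)) \<le> a * real (Pseq a (j - 1))"
    have "j \<le> j - 1" using Least_le[of "\<lambda>j. real (Pseq a (Suc k)) \<le> a * real (Pseq a j)" "j - 1"] h j_def by simp
    then show False using j1 by simp
  qed
  show ?thesis using j1 jP jm by (intro exI[of _ j]) simp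
qed


lemma Pseq_init:
  fixes n x :: nat
  assumes a: "a = real x + 1 / real n" and n1: "n \<ge> 1" and x0: "x > 0"
  shows "i \<le> Suc x \<Longrightarrow> Pseq a i = i"
proof (induction i)
  case 0 then show ?case by (simp add: Pseq_0)
next
  case (Suc i)
  have a1: "a \<ge> 1" using a x0 by (simp add: add_increasing2)
  show ?case
  proof (cases i)
    case 0 then show ?thesis using Pseq_1[of a] by simp
  next
    case (Suc k)
    have Pi: "Pseq a i = i" using Suc.IH Suc.prems by simp
    have "real i \<le> real x" using Suc.prems by simp
    moreover have "0 \<le> 1 / real n" by simp
    ultimately have "real i \<le> a" using a by linarith
    then have "Pseq a (Suc (Suc k)) = Pseq a (Suc k) + Pseq a 1"
      using Pi Suc by (intro Pseq_step[OF a1]) (auto simp: Pseq_0 Pseq_1)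
    then show ?thesis using Pi Suc Pseq_1[of a] by simp
  qed
qed


lemma Pseq_inv:
  fixes n x :: nat
  assumes a: "a = real x + 1 / real n" and n1: "n \<ge> 1" and x0: "x > 0"
    and fx: "fact n dvd x"
  shows "1 \<le> k \<Longrightarrow> (\<exists>k'\<le>k. Pseq a k' = n * x + 1) \<or>
     (\<exists>j0 t. j0 < n \<and> Suc j0 * t < x \<and> Pseq a k = j0 * x + 1 + Suc j0 * t)"
proof (induction k rule: dec_induct)
  case base
  show ?case using n1 x0 Pseq_1[of a] by (intro disjI2 exI[of _ 0]) auto
next
  case (step k)
  have a1: "a \<ge> 1" using a x0 by (simp add: add_increasing2)
  have nx: "n \<le> x"
    using fx x0 fact_ge_self[of n] by (metis dvd_imp_le le_trans)
  show ?case
  proof (cases "\<exists>k'\<le>k. Pseq a k' = n * x + 1")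
    case True then show ?thesis using le_SucI by blast
  next
    case False
    then obtain j0 t where j0n: "j0 < n" and jt: "Suc j0 * t < x"
      and Pk: "Pseq a k = j0 * x + 1 + Suc j0 * t" using step.IH by blast
    obtain k0 where k0: "k = Suc k0" using step.hyps by (cases k) auto
    have "Suc j0 dvd fact n" using j0n by (intro dvd_fact) auto
    then have "Suc j0 dvd x" using fx dvd_trans by blast
    then obtain q where q: "x = Suc j0 * q" by blast
    have "t < q" using jt unfolding q by (rule mult_left_less_imp_less) simp
    then have tq: "Suc j0 * Suc t \<le> x" using q by (metis Suc_leI mult_le_mono2)
    have Pj: "Pseq a (Suc j0) = Suc j0" using Pseq_init[OF a n1 x0] j0n nx by simp
    have Pj0: "Pseq a j0 = j0" using Pseq_init[OF a n1 x0] j0n nx by simp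
    have r1: "real j0 / real n < 1" using j0n by simp
    have e1: "a * real j0 = real x * real j0 + real j0 / real n" by (simp add: a algebra_simps)
    have c1: "a * real (Pseq a (Suc j0 - 1)) < real (Pseq a (Suc k0))"
    proof -
      have pk_r: "real (Pseq a (Suc k0)) = real x * real j0 + 1 + real (Suc j0 * t)"
        using Pk k0 by simp
      have nn: "0 \<le> real (Suc j0 * t)" by (rule of_nat_0_le_iff)
      have e: "Pseq a (Suc j0 - 1) = j0" using Pj0 by simp
      show ?thesis unfolding e using pk_r nn e1 r1 by linarith
    qed
    have "Pseq a k \<le> Suc j0 * x" using Pk tq by (simp add: algebra_simps)
    then have "real (Pseq a k) \<le> real x * real (Suc j0)" by (metis mult.commute of_nat_le_iff of_nat_mult)
    also have "\<dots> \<le> a * real (Suc j0)" using a by (simp add: mult_right_mono)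
    finally have c2: "real (Pseq a (Suc k0)) \<le> a * real (Pseq a (Suc j0))" using Pj k0 by simp
    have "Pseq a (Suc (Suc k0)) = Pseq a (Suc k0) + Pseq a (Suc j0)"
      by (rule Pseq_step[OF a1 _ c1 c2]) simp
    then have Pk1: "Pseq a (Suc k) = j0 * x + 1 + Suc j0 * Suc t" using Pk Pj k0 by simp
    show ?thesis
    proof (cases "Suc j0 * Suc t < x")
      case True then show ?thesis using Pk1 j0n by blast
    next
      case False
      then have eq: "Suc j0 * Suc t = x" using tq by simp
      show ?thesis
      proof (cases "Suc j0 < n")
        case True
        then show ?thesis using Pk1 eq x0
          by (intro disjI2 exI[of _ "Suc j0"] exI[of _ 0]) (simp add: algebra_simps)
      next
        case False
        then have sj: "Suc j0 = n" using j0n by simp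
        have "n * x + 1 = j0 * x + 1 + x" unfolding sj[symmetric] by simp
        then have "Pseq a (Suc k) = n * x + 1" using Pk1[unfolded eq] by simp
        then show ?thesis by blast
      qed
    qed
  qed
qed

theorem mainTheorem11:
  fixes n x :: nat
  assumes "n \<ge> 1" and "x > 0" and "fact n dvd x"
  shows "cutoff (real x + 1 / real n)"
proof -
  define a where "a = real x + 1 / real n"
  note aa = a_def[symmetric]
  have n1: "n \<ge> 1" and x0: "x > 0" and fx: "fact n dvd x" using assms by auto
  have a1: "a \<ge> 1" using a_def x0 by (simp add: add_increasing2)
  have nx: "n \<le> x"
    using fx x0 fact_ge_self[of n] by (metis dvd_imp_le le_trans)
  have sm: "strict_mono (Pseq a)" using Pseq_strict_mono[OF a1] .
  have inc: "m \<le> Pseq a m" for m using strict_mono_imp_increasing[OF sm] .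
  define K where "K = n * x + 1"
  have "\<exists>k'\<le>K. Pseq a k' = n * x + 1"
  proof -
    have "K \<ge> 1" by (simp add: K_def)
    from Pseq_inv[OF a_def n1 x0 fx this]
    show ?thesis
    proof
      assume "\<exists>j0 t. j0 < n \<and> Suc j0 * t < x \<and> Pseq a K = j0 * x + 1 + Suc j0 * t"
      then obtain j0 t where j0n: "j0 < n" and jt: "Suc j0 * t < x"
        and Pk: "Pseq a K = j0 * x + 1 + Suc j0 * t" by blast
      have "Pseq a K \<le> j0 * x + x" using Pk jt by simp
      also have "\<dots> \<le> n * x" using j0n
        by (metis Suc_leI add.commute mult_Suc mult_le_mono1)
      finally show ?thesis using inc[of K] K_def by simp
    qed
  qed
  then obtain k where Pk: "Pseq a k = n * x + 1" by blast
  have "k \<noteq> 0"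
  proof
    assume "k = 0"
    then show False using Pk Pseq_0[of a] by simp
  qed
  then obtain k0 where k0: "k = Suc k0" by (cases k) auto
  have an: "a * real n = real (n * x + 1)" using n1 by (simp add: a_def algebra_simps)
  have Pn: "Pseq a n = n" using Pseq_init[OF a_def n1 x0] nx by simp
  have Pn1: "Pseq a (n - 1) = n - 1" using Pseq_init[OF a_def n1 x0] nx by simp
  have "real (n - 1) < real n" using n1 by simp
  then have "a * real (n - 1) < a * real n" using a1 by simp
  then have c1: "a * real (Pseq a (n - 1)) < real (Pseq a (Suc k0))" using Pn1 Pk k0 an by simp
  have c2: "real (Pseq a (Suc k0)) \<le> a * real (Pseq a n)" using Pk k0 an Pn by simp
  have stepa: "Pseq a (Suc (Suc k0)) = Pseq a (Suc k0) + Pseq a n"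
    by (rule Pseq_step[OF a1 n1 c1 c2])
  have "\<forall>\<beta>. 1 \<le> \<beta> \<and> \<beta> < a \<longrightarrow> Pseq a \<noteq> Pseq \<beta>"
  proof (intro allI impI notI)
    fix b assume b: "1 \<le> b \<and> b < a" and eq: "Pseq a = Pseq b"
    obtain j where j1: "j \<ge> 1" and h1: "b * real (Pseq b (j - 1)) < real (Pseq b (Suc k0))"
      and h2: "real (Pseq b (Suc k0)) \<le> b * real (Pseq b j)"
      using Pseq_step_ex[of b k0] b by blast
    have "Pseq b (Suc (Suc k0)) = Pseq b (Suc k0) + Pseq b j"
      using Pseq_step[of b j k0] b j1 h1 h2 by blast
    then have "Pseq a j = Pseq a n" using stepa eq by simp
    then have "j = n" using sm by (simp add: strict_mono_eq)
    then have "real (n * x + 1) \<le> b * real n" using h2 eq Pk k0 Pn by simp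
    also have "\<dots> < a * real n" using b n1 by simp
    finally show False using an by simp
  qed
  then show ?thesis using a1 by (simp add: cutoff_def a_def)
qed

end
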